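(* Let $n\ge 1$ and let $A$ be a distributive meet-complemented lattice in which $\Box x$ and $\Diamond x$ exist for every $x\in A$ and such that $\Box^{n+1}a=\Box^n a$ for all $a\in A$. Then for every $a\in A$ the set $\{b\in A: b\le a \text{ and } b\vee\neg b=1\}$ has a maximum $Ba$, and $Ba=\Box^n a$.
   Context: A meet-complemented lattice is a lattice $(L,\le)$ such that for every $a\in L$ the element $\neg a=\max\{b\in L: a\wedge b\le c\ \text{for all } c\in L\}$ exists; it is bounded with bottom $0$ and top $1$. For $a\in L$, $\Box a=\max\{b\in L: a\vee\neg b=1\}$ and $\Diamond a=\min\{b\in L: \neg a\vee b=1\}$; $\Box^n$ is the $n$-fold composite of $\Box$. $Ba$ denotes the greatest Boolean element (element $b$ with $b\vee\neg b=1$) below $a$. *)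

theory Defs
  imports Main
begin

(* Lattices are modelled as types of class bounded_lattice (a meet-complemented
   lattice is automatically bounded); distributivity is the class distrib_lattice. *)

definition is_max :: "'a::order set \<Rightarrow> 'a \<Rightarrow> bool" where
  "is_max S m \<longleftrightarrow> m \<in> S \<and> (\<forall>x\<in>S. x \<le> m)"

definition is_min :: "'a::order set \<Rightarrow> 'a \<Rightarrow> bool" where
  "is_min S m \<longleftrightarrow> m \<in> S \<and> (\<forall>x\<in>S. m \<le> x)"

definition negset :: "'a::bounded_lattice \<Rightarrow> 'a set" where
  "negset a = {b. \<forall>c. inf a b \<le> c}"

definition meet_complemented :: "'a::bounded_lattice itself \<Rightarrow> bool" where
  "meet_complemented _ \<longleftrightarrow> (\<forall>a::'a. \<exists>m. is_max (negset a) m)"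

definition neg :: "'a::bounded_lattice \<Rightarrow> 'a" where
  "neg a = (THE m. is_max (negset a) m)"

definition boxset :: "'a::bounded_lattice \<Rightarrow> 'a set" where
  "boxset a = {b. sup a (neg b) = top}"

definition diaset :: "'a::bounded_lattice \<Rightarrow> 'a set" where
  "diaset a = {b. sup (neg a) b = top}"

definition box :: "'a::bounded_lattice \<Rightarrow> 'a" where
  "box a = (THE m. is_max (boxset a) m)"

definition dia :: "'a::bounded_lattice \<Rightarrow> 'a" where
  "dia a = (THE m. is_min (diaset a) m)"

definition boolbelow :: "'a::bounded_lattice \<Rightarrow> 'a set" where
  "boolbelow a = {b. b \<le> a \<and> sup b (neg b) = top}"

definition Bgr :: "'a::bounded_lattice \<Rightarrow> 'a" where
  "Bgr a = (THE m. is_max (boolbelow a) m)"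

end

theory Submission
  imports Defs
begin

lemma is_max_unique: "is_max S m \<Longrightarrow> is_max S m' \<Longrightarrow> m = (m'::'a::order)"
  unfolding is_max_def by (meson order.antisym)

lemma the_max: "\<exists>m. is_max S m \<Longrightarrow> is_max S (THE m. is_max S (m::'a::order))"
proof -
  assume "\<exists>m. is_max S m"
  then obtain m where "is_max S m" by blast
  then show ?thesis by (rule theI) (use \<open>is_max S m\<close> is_max_unique in blast)
qed

lemma neg_inf:
  assumes "meet_complemented TYPE('a::{bounded_lattice, distrib_lattice})"
  shows "inf (b::'a) (neg b) = bot"
proof -
  have "is_max (negset b) (neg b)" using assms unfolding meet_complemented_def neg_def
    by (intro the_max) blast
  then have "neg b \<in> negset b" unfolding is_max_def by blast
  then have "inf b (neg b) \<le> bot" unfolding negset_def by blast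
  then show ?thesis by (simp add: bot_unique)
qed

theorem proposition25:
  fixes n :: nat
  assumes "n \<ge> 1"
    and "meet_complemented TYPE('a::{bounded_lattice, distrib_lattice})"
    and "\<forall>x::'a. \<exists>m. is_max (boxset x) m"
    and "\<forall>x::'a. \<exists>m. is_min (diaset x) m"
    and "\<forall>a::'a. (box ^^ (n + 1)) a = (box ^^ n) a"
  shows "\<forall>a::'a. (\<exists>m. is_max (boolbelow a) m) \<and> Bgr a = (box ^^ n) a"
proof -
  have bm: "is_max (boxset x) (box x)" for x :: 'a
    using assms(3) unfolding box_def by (intro the_max) blast
  have bin: "sup x (neg (box x)) = top" for x :: 'a
    using bm[of x] unfolding is_max_def boxset_def by blast
  have bge: "sup x (neg y) = top \<Longrightarrow> y \<le> box x" for x y :: 'a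
    using bm[of x] unfolding is_max_def boxset_def by blast
  have le: "y \<le> x" if "sup x (neg y) = top" for x y :: 'a
  proof -
    have "y = inf y (sup x (neg y))" using that by simp
    also have "\<dots> = sup (inf y x) (inf y (neg y))" by (rule inf_sup_distrib1)
    also have "\<dots> = inf y x" using neg_inf[OF assms(2)] by simp
    finally show ?thesis by (metis inf.absorb_iff1 inf_commute)
  qed
  have boxle: "box x \<le> x" for x :: 'a using le[OF bin] .
  have boxn_le: "(box ^^ k) x \<le> x" for k and x :: 'a
    by (induction k) (auto intro: order_trans[OF boxle])
  have boolle: "b \<le> (box ^^ k) x" if "b \<le> x" "sup b (neg b) = top" for k and b x :: 'a
  proof (induction k)
    case 0 then show ?case using that(1) by simp
  next
    case (Suc k)
    have "sup ((box ^^ k) x) (neg b) = top"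
    proof -
      have "sup b (neg b) \<le> sup ((box ^^ k) x) (neg b)" using Suc.IH by (intro sup_mono) simp_all
      then show ?thesis using that(2) by (simp add: top_unique)
    qed
    then show ?case using bge by simp
  qed
  show ?thesis
  proof
    fix a :: 'a
    let ?c = "(box ^^ n) a"
    have bc: "box ?c = ?c" using assms(5) by simp
    have cbool: "sup ?c (neg ?c) = top" using bin[of ?c] bc by simp
    have mx: "is_max (boolbelow a) ?c"
      unfolding is_max_def boolbelow_def using cbool boxn_le boolle by blast
    then have "is_max (boolbelow a) (Bgr a)" unfolding Bgr_def by (intro the_max) blast
    from this mx have "Bgr a = ?c" by (rule is_max_unique)
    with mx show "(\<exists>m. is_max (boolbelow a) m) \<and> Bgr a = ?c" by blast
  qed
qed

end
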